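(* Let $n>0$ be the degree of freedom and $\eta_0$ a real constant. Let $k,\mu$ be nonzero constants with the same sign. Consider the isenthalpic van der Waals pressure $$p(\rho)=\frac{3\rho\,(n\rho^2+(6-3n)\rho+2\eta_0)}{6+3n-n\rho},\qquad 0<\rho<3,$$ and put $$Q'(\rho)=\frac{k}{\mu}\rho\,p'(\rho)=\frac{6k\rho}{\mu(6+3n-\rho n)^2}\Big(3\eta_0(n+2)+\rho(6-3n)(6+3n)+6n(n+1)\rho^2-n^2\rho^3\Big).$$ Let $C_1\neq0$ and $C_2$ be real constants, let $J\subset(0,3)$ be an open interval on which $C_1\rho+C_2\neq0$, and let $G$ be an antiderivative of $\frac{Q'(\rho)}{C_1(C_1\rho+C_2)}$ on $J$. If $$\eta_0>\frac{2(n-2)^2(2n+5)}{3n(n+2)},$$ then $G$ is invertible on $J$.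
   Context: The van der Waals gas (in reduced units) has state equations $p=\frac{8T}{3v-1}-\frac{3}{v^2}$ and $e=\frac{4n}{3}T-\frac{3}{v}$, where $v=\rho^{-1}>1/3$ is the specific volume (so $0<\rho<3$), $T$ is the temperature, $e$ is the specific energy and $n$ is the degree of freedom. An isenthalpic process is one with specific enthalpy $\eta=e+p\rho^{-1}$ equal to the constant $\eta_0$; along it, $p$ as a function of $\rho$ is given by the displayed formula. The permeability $k$ and viscosity $\mu$ are constants. *)

theory Defs
  imports "HOL-Analysis.Analysis"
begin

definition vdw_p :: "real \<Rightarrow> real \<Rightarrow> real \<Rightarrow> real" where
  "vdw_p n eta0 rho = 3 * rho * (n * rho^2 + (6 - 3*n) * rho + 2 * eta0) / (6 + 3*n - n * rho)"

definition vdw_Qd :: "real \<Rightarrow> real \<Rightarrow> real \<Rightarrow> real \<Rightarrow> real \<Rightarrow> real" where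
  "vdw_Qd n eta0 k mu rho = k / mu * rho * deriv (vdw_p n eta0) rho"

end

theory Submission
  imports Defs
begin

lemma p_deriv:
  fixes n eta0 rho :: real
  assumes "6 + 3*n - n*rho \<noteq> 0"
  shows "(vdw_p n eta0 has_real_derivative
     6 * (3*eta0*(n+2) + rho*(6-3*n)*(6+3*n) + 6*n*(n+1)*rho^2 - n^2*rho^3) / (6 + 3*n - n*rho)^2) (at rho)"
proof -
  have e: "vdw_p n eta0 = (\<lambda>r. 3 * r * (n * r^2 + (6 - 3*n) * r + 2 * eta0) / (6 + 3*n - n * r))"
    by (rule ext) (simp add: vdw_p_def)
  show ?thesis unfolding e
    apply (rule derivative_eq_intros refl)+
    using assms apply (simp add: divide_simps)
    apply (simp add: algebra_simps power2_eq_square power3_eq_cube)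
    done
qed

lemma P_pos:
  fixes n eta0 rho :: real
  assumes "n > 0" "0 < rho" "rho < 3"
    and "eta0 > 2 * (n - 2)^2 * (2*n + 5) / (3 * n * (n + 2))"
  shows "3*eta0*(n+2) + rho*(6-3*n)*(6+3*n) + 6*n*(n+1)*rho^2 - n^2*rho^3 > 0"
proof -
  define x where "x = n*rho"
  have "n*rho < n*3" using assms by (intro mult_strict_left_mono) auto
  then have x3: "x < 4*n+10" using assms unfolding x_def by linarith
  have h1: "3*n*(n+2)*eta0 - 2*(n-2)^2*(2*n+5) > 0"
  proof -
    have B: "3 * n * (n + 2) > 0" using assms(1) by simp
    have "2 * (n - 2)^2 * (2*n + 5) < eta0 * (3 * n * (n + 2))"
      using assms(4) pos_divide_less_eq[OF B] by blast
    then show ?thesis by (simp add: algebra_simps)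
  qed
  have h2: "(x-n+2)^2*(x-4*n-10) \<le> 0"
    using x3 by (simp add: mult_nonneg_nonpos)
  have id: "n*(3*eta0*(n+2) + rho*(6-3*n)*(6+3*n) + 6*n*(n+1)*rho^2 - n^2*rho^3)
     = 3*n*(n+2)*eta0 - 2*(n-2)^2*(2*n+5) - (x-n+2)^2*(x-4*n-10)"
    unfolding x_def by (simp add: algebra_simps power2_eq_square power3_eq_cube)
  have "n*(3*eta0*(n+2) + rho*(6-3*n)*(6+3*n) + 6*n*(n+1)*rho^2 - n^2*rho^3) > 0"
    using id h1 h2 by linarith
  then show ?thesis using assms(1) by (simp add: zero_less_mult_iff)
qed

theorem mainTheorem3:
  fixes n eta0 k mu C1 C2 a b :: real and G :: "real \<Rightarrow> real"
  assumes "n > 0"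
    and "k \<noteq> 0" and "mu \<noteq> 0" and "k * mu > 0"
    and "C1 \<noteq> 0"
    and "0 \<le> a" and "a < b" and "b \<le> 3"
    and "\<forall>rho \<in> {a<..<b}. C1 * rho + C2 \<noteq> 0"
    and "\<forall>rho \<in> {a<..<b}.
           (G has_real_derivative (vdw_Qd n eta0 k mu rho / (C1 * (C1 * rho + C2)))) (at rho)"
    and "eta0 > 2 * (n - 2)^2 * (2*n + 5) / (3 * n * (n + 2))"
  shows "inj_on G {a<..<b}"
proof -
  have nz: "vdw_Qd n eta0 k mu rho / (C1 * (C1 * rho + C2)) \<noteq> 0" if r: "rho \<in> {a<..<b}" for rho
  proof -
    have r0: "0 < rho" "rho < 3" using r assms by auto
    have "n*rho < n*3" using r0 assms(1) by (intro mult_strict_left_mono) auto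
    then have D: "6 + 3*n - n*rho > 0" by linarith
    have "deriv (vdw_p n eta0) rho =
       6 * (3*eta0*(n+2) + rho*(6-3*n)*(6+3*n) + 6*n*(n+1)*rho^2 - n^2*rho^3) / (6 + 3*n - n*rho)^2"
      using p_deriv[of n rho eta0] D by (intro DERIV_imp_deriv) auto
    moreover have "3*eta0*(n+2) + rho*(6-3*n)*(6+3*n) + 6*n*(n+1)*rho^2 - n^2*rho^3 > 0"
      using P_pos[OF assms(1) r0 assms(11)] .
    ultimately have "deriv (vdw_p n eta0) rho \<noteq> 0" using D by simp
    then show ?thesis using r0 assms(2,3,5,9) r by (simp add: vdw_Qd_def)
  qed
  show ?thesis
  proof (rule linorder_inj_onI')
    fix i j assume ij: "i \<in> {a<..<b}" "j \<in> {a<..<b}" "i < j"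
    have "\<And>x. i \<le> x \<Longrightarrow> x \<le> j \<Longrightarrow> DERIV G x :> (vdw_Qd n eta0 k mu x / (C1 * (C1 * x + C2)))"
      using assms(10) ij by auto
    from MVT2[OF ij(3) this] obtain z where z: "i < z" "z < j"
      "G j - G i = (j - i) * (vdw_Qd n eta0 k mu z / (C1 * (C1 * z + C2)))" by blast
    have "z \<in> {a<..<b}" using z ij by auto
    then show "G i \<noteq> G j" using nz z ij(3) by auto
  qed
qed

end
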